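(* Let $P=\Bbbk[x_1,x_2,x_3]$ with Poisson bracket $\{x_1,x_2\}=0$, $\{x_2,x_3\}=2x_1x_2$, $\{x_3,x_1\}=x_1^2$. If $G$ is a nontrivial finite subgroup of $\mathrm{PAut}_{\mathrm{gr}}(P)$ generated by Poisson reflections, then $P^G$ is not isomorphic to $P$ as Poisson algebras.
   Context: $\Bbbk$ is algebraically closed of characteristic $0$; $P$ has the standard grading. $\mathrm{PAut}_{\mathrm{gr}}(P)$ is the group of degree-preserving bijective algebra homomorphisms preserving the bracket. A Poisson reflection is a finite-order $\phi\in\mathrm{PAut}_{\mathrm{gr}}(P)$ such that $\phi|_{P_1}$ has eigenvalues $1,1,\xi$ with $\xi\neq1$ a primitive root of unity. $P^G$ is the subalgebra of $G$-invariants with the restricted bracket. *)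

theory Defs
  imports "HOL-Library.Product_Plus" "HOL-Library.Poly_Mapping"
          "HOL-Computational_Algebra.Polynomial" "Jordan_Normal_Form.Char_Poly"
begin

text \<open>The polynomial ring k[x1,x2,x3]: finitely supported maps from exponent
 triples (a,b,c) (the monomial x1^a x2^b x3^c) to coefficients.\<close>
type_synonym 'k P3 = "(nat \<times> nat \<times> nat) \<Rightarrow>\<^sub>0 'k"

definition alg_closed_type :: "'k::field itself \<Rightarrow> bool" where
  "alg_closed_type _ \<longleftrightarrow> (\<forall>p::'k poly. 0 < degree p \<longrightarrow> (\<exists>z. poly p z = 0))"

definition X1 :: "'k::comm_ring_1 P3" where "X1 = Poly_Mapping.single (1,0,0) 1"
definition X2 :: "'k::comm_ring_1 P3" where "X2 = Poly_Mapping.single (0,1,0) 1"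
definition X3 :: "'k::comm_ring_1 P3" where "X3 = Poly_Mapping.single (0,0,1) 1"

definition const :: "'k::comm_ring_1 \<Rightarrow> 'k P3" where
  "const c = Poly_Mapping.single (0,0,0) c"

definition pd1 :: "'k::comm_ring_1 P3 \<Rightarrow> 'k P3" where
  "pd1 f = (\<Sum>m\<in>Poly_Mapping.keys f. case m of (a,b,c) \<Rightarrow>
            Poly_Mapping.single (a - 1, b, c) (of_nat a * Poly_Mapping.lookup f m))"
definition pd2 :: "'k::comm_ring_1 P3 \<Rightarrow> 'k P3" where
  "pd2 f = (\<Sum>m\<in>Poly_Mapping.keys f. case m of (a,b,c) \<Rightarrow>
            Poly_Mapping.single (a, b - 1, c) (of_nat b * Poly_Mapping.lookup f m))"
definition pd3 :: "'k::comm_ring_1 P3 \<Rightarrow> 'k P3" where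
  "pd3 f = (\<Sum>m\<in>Poly_Mapping.keys f. case m of (a,b,c) \<Rightarrow>
            Poly_Mapping.single (a, b, c - 1) (of_nat c * Poly_Mapping.lookup f m))"

text \<open>The Poisson bracket determined by {x1,x2}=0, {x2,x3}=2x1x2, {x3,x1}=x1^2
  via the Leibniz rule:
  {f,g} = sum_{i,j} d_i f d_j g {x_i,x_j}.\<close>
definition pb :: "'k::comm_ring_1 P3 \<Rightarrow> 'k P3 \<Rightarrow> 'k P3" where
  "pb f g = (pd1 f * pd2 g - pd2 f * pd1 g) * 0
          + (pd2 f * pd3 g - pd3 f * pd2 g) * (2 * X1 * X2)
          + (pd3 f * pd1 g - pd1 f * pd3 g) * (X1 ^ 2)"

definition homogeneous :: "nat \<Rightarrow> 'k::comm_ring_1 P3 \<Rightarrow> bool" where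
  "homogeneous d f \<longleftrightarrow> (\<forall>m\<in>Poly_Mapping.keys f. case m of (a,b,c) \<Rightarrow> a + b + c = d)"

definition is_alg_hom :: "('k::comm_ring_1 P3 \<Rightarrow> 'k P3) \<Rightarrow> bool" where
  "is_alg_hom \<phi> \<longleftrightarrow> (\<forall>f g. \<phi> (f + g) = \<phi> f + \<phi> g) \<and> (\<forall>f g. \<phi> (f * g) = \<phi> f * \<phi> g)
     \<and> (\<forall>c f. \<phi> (const c * f) = const c * \<phi> f) \<and> \<phi> 1 = 1"

definition PAut_gr :: "('k::comm_ring_1 P3 \<Rightarrow> 'k P3) set" where
  "PAut_gr = {\<phi>. bij \<phi> \<and> is_alg_hom \<phi> \<and> (\<forall>d f. homogeneous d f \<longrightarrow> homogeneous d (\<phi> f))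
                 \<and> (\<forall>f g. \<phi> (pb f g) = pb (\<phi> f) (\<phi> g))}"

text \<open>Matrix of phi restricted to P_1 w.r.t. basis x1,x2,x3
  (column j = coordinates of phi(x_{j+1})).\<close>
definition var :: "nat \<Rightarrow> nat \<times> nat \<times> nat" where
  "var i = (if i = 0 then (1,0,0) else if i = 1 then (0,1,0) else (0,0,1))"

definition lin_part :: "('k::comm_ring_1 P3 \<Rightarrow> 'k P3) \<Rightarrow> 'k mat" where
  "lin_part \<phi> = mat 3 3 (\<lambda>(i,j). Poly_Mapping.lookup (\<phi> (Poly_Mapping.single (var j) 1)) (var i))"

definition poisson_reflection :: "('k::field P3 \<Rightarrow> 'k P3) \<Rightarrow> bool" where
  "poisson_reflection \<phi> \<longleftrightarrow> \<phi> \<in> PAut_gr \<and> (\<exists>n>0. \<phi> ^^ n = id) \<and>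
     (\<exists>\<xi>. \<xi> \<noteq> 1 \<and> (\<exists>n>0. \<xi> ^ n = 1) \<and>
          char_poly (lin_part \<phi>) = [:-1, 1:] ^ 2 * [:-\<xi>, 1:])"

inductive_set gen_group :: "('a \<Rightarrow> 'a) set \<Rightarrow> ('a \<Rightarrow> 'a) set" for S where
  gen_id: "id \<in> gen_group S"
| gen_base: "s \<in> S \<Longrightarrow> s \<in> gen_group S"
| gen_comp: "a \<in> gen_group S \<Longrightarrow> b \<in> gen_group S \<Longrightarrow> a \<circ> b \<in> gen_group S"
| gen_inv: "a \<in> gen_group S \<Longrightarrow> inv_into UNIV a \<in> gen_group S"

definition finite_subgroup_PAut :: "('k::comm_ring_1 P3 \<Rightarrow> 'k P3) set \<Rightarrow> bool" where
  "finite_subgroup_PAut G \<longleftrightarrow> finite G \<and> G \<subseteq> PAut_gr \<and> id \<in> G \<and>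
     (\<forall>a\<in>G. \<forall>b\<in>G. a \<circ> b \<in> G) \<and> (\<forall>a\<in>G. inv_into UNIV a \<in> G)"

definition invariants :: "('k::comm_ring_1 P3 \<Rightarrow> 'k P3) set \<Rightarrow> 'k P3 set" where
  "invariants G = {f. \<forall>g\<in>G. g f = f}"

definition poisson_iso_to_P :: "'k::comm_ring_1 P3 set \<Rightarrow> bool" where
  "poisson_iso_to_P A \<longleftrightarrow> (\<exists>\<psi> :: 'k P3 \<Rightarrow> 'k P3. bij_betw \<psi> A UNIV \<and>
     (\<forall>f\<in>A. \<forall>g\<in>A. \<psi> (f + g) = \<psi> f + \<psi> g \<and> \<psi> (f * g) = \<psi> f * \<psi> g
                  \<and> \<psi> (pb f g) = pb (\<psi> f) (\<psi> g)) \<and>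
     (\<forall>c. \<forall>f\<in>A. \<psi> (const c * f) = const c * \<psi> f) \<and> \<psi> 1 = 1)"

end

theory Submission
  imports Defs
begin

abbreviation cf :: "'k::zero P3 \<Rightarrow> nat\<times>nat\<times>nat \<Rightarrow> 'k" where "cf f k \<equiv> Poly_Mapping.lookup f k"
abbreviation ks :: "'k::zero P3 \<Rightarrow> (nat\<times>nat\<times>nat) set" where "ks f \<equiv> Poly_Mapping.keys f"
abbreviation sg :: "nat\<times>nat\<times>nat \<Rightarrow> 'k::zero \<Rightarrow> 'k P3" where "sg k v \<equiv> Poly_Mapping.single k v"

lemma zero_triple: "(0::nat\<times>nat\<times>nat) = (0,0,0)" by (simp add: zero_prod_def)

lemma lookup_pd1: "cf (pd1 (f::'k::comm_ring_1 P3)) (a,b,c) = of_nat (Suc a) * cf f (Suc a, b, c)"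
  unfolding pd1_def lookup_sum
proof (subst sum.cong[OF refl])
  fix m assume "m \<in> ks f"
  show "cf (case m of (a', b', c') \<Rightarrow> sg (a' - 1, b', c') (of_nat a' * cf f m)) (a, b, c)
     = (if m = (Suc a,b,c) then of_nat (Suc a) * cf f (Suc a,b,c) else 0)"
    by (cases m) (auto simp: lookup_single when_def, (case_tac aa; simp)+)
next
  show "(\<Sum>m\<in>ks f. if m = (Suc a,b,c) then of_nat (Suc a) * cf f (Suc a,b,c) else 0) = of_nat (Suc a) * cf f (Suc a, b, c)"
    by (auto simp: in_keys_iff)
qed


lemma lookup_pd2: "cf (pd2 (f::'k::comm_ring_1 P3)) (a,b,c) = of_nat (Suc b) * cf f (a, Suc b, c)"
  unfolding pd2_def lookup_sum
proof (subst sum.cong[OF refl])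
  fix m assume "m \<in> ks f"
  show "cf (case m of (a', b', c') \<Rightarrow> sg (a', b' - 1, c') (of_nat b' * cf f m)) (a, b, c)
     = (if m = (a,Suc b,c) then of_nat (Suc b) * cf f (a,Suc b,c) else 0)"
    by (cases m) (auto simp: lookup_single when_def split: nat_diff_split_asm)
next
  show "(\<Sum>m\<in>ks f. if m = (a,Suc b,c) then of_nat (Suc b) * cf f (a,Suc b,c) else 0) = of_nat (Suc b) * cf f (a, Suc b, c)"
    by (auto simp: in_keys_iff)
qed

lemma lookup_pd3: "cf (pd3 (f::'k::comm_ring_1 P3)) (a,b,c) = of_nat (Suc c) * cf f (a, b, Suc c)"
  unfolding pd3_def lookup_sum
proof (subst sum.cong[OF refl])
  fix m assume "m \<in> ks f"
  show "cf (case m of (a', b', c') \<Rightarrow> sg (a', b', c' - 1) (of_nat c' * cf f m)) (a, b, c)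
     = (if m = (a,b,Suc c) then of_nat (Suc c) * cf f (a,b,Suc c) else 0)"
    by (cases m) (auto simp: lookup_single when_def split: nat_diff_split_asm)
next
  show "(\<Sum>m\<in>ks f. if m = (a,b,Suc c) then of_nat (Suc c) * cf f (a,b,Suc c) else 0) = of_nat (Suc c) * cf f (a, b, Suc c)"
    by (auto simp: in_keys_iff)
qed

lemma P3_eqI: "(\<And>a b c. cf f (a,b,c) = cf g (a,b,c)) \<Longrightarrow> f = g"
  by (rule poly_mapping_eqI) auto

lemma pd1_add: "pd1 (f + g :: 'k::comm_ring_1 P3) = pd1 f + pd1 g"
  by (rule P3_eqI) (simp add: lookup_add lookup_pd1 algebra_simps)
lemma pd2_add: "pd2 (f + g :: 'k::comm_ring_1 P3) = pd2 f + pd2 g"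
  by (rule P3_eqI) (simp add: lookup_add lookup_pd2 algebra_simps)
lemma pd3_add: "pd3 (f + g :: 'k::comm_ring_1 P3) = pd3 f + pd3 g"
  by (rule P3_eqI) (simp add: lookup_add lookup_pd3 algebra_simps)

lemma pd1_single: "pd1 (sg (a,b,c) v :: 'k::comm_ring_1 P3) = sg (a-1,b,c) (of_nat a * v)"
  by (rule P3_eqI) (cases a, auto simp: lookup_pd1 lookup_single when_def)
lemma pd2_single: "pd2 (sg (a,b,c) v :: 'k::comm_ring_1 P3) = sg (a,b-1,c) (of_nat b * v)"
  by (rule P3_eqI) (cases b, auto simp: lookup_pd2 lookup_single when_def)
lemma pd3_single: "pd3 (sg (a,b,c) v :: 'k::comm_ring_1 P3) = sg (a,b,c-1) (of_nat c * v)"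
  by (rule P3_eqI) (cases c, auto simp: lookup_pd3 lookup_single when_def)

lemma pb_alt: "pb f g = (pd2 f * pd3 g - pd3 f * pd2 g) * (2 * X1 * X2) + (pd3 f * pd1 g - pd1 f * pd3 g) * X1^2"
  by (simp add: pb_def)

lemma pd_X [simp]:
  "pd1 (X1::'k::comm_ring_1 P3) = 1" "pd2 (X1::'k::comm_ring_1 P3) = 0" "pd3 (X1::'k::comm_ring_1 P3) = 0"
  "pd1 (X2::'k::comm_ring_1 P3) = 0" "pd2 (X2::'k::comm_ring_1 P3) = 1" "pd3 (X2::'k::comm_ring_1 P3) = 0"
  "pd1 (X3::'k::comm_ring_1 P3) = 0" "pd2 (X3::'k::comm_ring_1 P3) = 0" "pd3 (X3::'k::comm_ring_1 P3) = 1"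
  by (simp_all add: X1_def X2_def X3_def pd1_single pd2_single pd3_single zero_triple[symmetric])



definition kap :: "nat\<times>nat\<times>nat \<Rightarrow> (nat \<Rightarrow>\<^sub>0 nat)" where
  "kap k = Poly_Mapping.single 0 (fst k) + Poly_Mapping.single 1 (fst (snd k)) + Poly_Mapping.single 2 (snd (snd k))"

lemma kap_add: "kap (k + l) = kap k + kap l"
  by (cases k; cases l) (simp add: kap_def single_add algebra_simps)

lemma kap_zero: "kap 0 = 0"
  by (simp add: kap_def zero_triple)

lemma kap_inj: assumes "kap k = kap l" shows "k = l"
proof -
  have "Poly_Mapping.lookup (kap k) i = Poly_Mapping.lookup (kap l) i" for i using assms by simp
  from this[of 0] this[of 1] this[of 2] show ?thesis
    by (cases k; cases l) (simp add: kap_def lookup_add lookup_single)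
qed

lemma pm_nonneg: "(0::nat \<Rightarrow>\<^sub>0 nat) \<le> f"
proof (cases "f = 0")
  case False
  then obtain k where k: "Poly_Mapping.lookup f k \<noteq> 0"
    by (metis lookup_zero poly_mapping_eqI)
  define k0 where "k0 = (LEAST k. Poly_Mapping.lookup f k \<noteq> 0)"
  have "Poly_Mapping.lookup f k0 \<noteq> 0" unfolding k0_def by (rule LeastI, rule k)
  moreover have "\<forall>k'<k0. Poly_Mapping.lookup f k' = 0"
    unfolding k0_def using not_less_Least by blast
  ultimately have "less_fun (Poly_Mapping.lookup 0) (Poly_Mapping.lookup f)"
    unfolding less_fun_def by (intro exI[of _ k0]) auto
  then show ?thesis by (simp add: less_eq_poly_mapping.rep_eq)
qed simp

lemma kap_nonneg: "0 \<le> kap k" by (rule pm_nonneg)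

lemma kap_pos: "k \<noteq> 0 \<Longrightarrow> 0 < kap k"
  using kap_nonneg[of k] kap_inj[of k 0] kap_zero by (auto simp: order_le_less)

definition lk :: "'k::zero P3 \<Rightarrow> nat\<times>nat\<times>nat" where
  "lk f = (THE k. k \<in> ks f \<and> kap k = Max (kap ` ks f))"

lemma lk_prop: assumes "f \<noteq> 0" shows "lk f \<in> ks f" "\<And>k. k \<in> ks f \<Longrightarrow> kap k \<le> kap (lk f)"
proof -
  have ne: "ks f \<noteq> {}" using assms by simp
  have "Max (kap ` ks f) \<in> kap ` ks f" using ne by (intro Max_in) auto
  then obtain k0 where k0: "k0 \<in> ks f" "kap k0 = Max (kap ` ks f)" by auto
  have "lk f = k0" unfolding lk_def
    by (rule the_equality) (use k0 kap_inj in auto)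
  then show "lk f \<in> ks f" using k0 by simp
  show "kap k \<le> kap (lk f)" if "k \<in> ks f" for k
    using \<open>lk f = k0\<close> k0 that by (auto intro!: Max_ge)
qed

lemma lookup_mult_keys: "cf (f * g) k = (\<Sum>l\<in>ks f. \<Sum>q\<in>ks g. if k = l + q then cf f l * cf g q else 0)"
proof -
  have "cf (f * g) k = (\<Sum>l. cf f l * (\<Sum>q. cf g q when k = l + q))" by (rule lookup_mult)
  also have "\<dots> = (\<Sum>l. cf f l * (\<Sum>q\<in>ks g. cf g q when k = l + q))"
    by (subst Sum_any.expand_superset[of "ks g"]) (auto simp: in_keys_iff)
  also have "\<dots> = (\<Sum>l\<in>ks f. cf f l * (\<Sum>q\<in>ks g. cf g q when k = l + q))"
    by (subst Sum_any.expand_superset[of "ks f"]) (auto simp: in_keys_iff)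
  also have "\<dots> = (\<Sum>l\<in>ks f. \<Sum>q\<in>ks g. if k = l + q then cf f l * cf g q else 0)"
    by (auto simp: sum_distrib_left when_def intro!: sum.cong)
  finally show ?thesis .
qed

lemma lead_mult:
  assumes "f \<noteq> 0" "g \<noteq> 0"
  shows "cf (f * g) (lk f + lk g) = cf f (lk f) * cf g (lk g)"
proof -
  have "cf (f * g) (lk f + lk g) = (\<Sum>l\<in>ks f. \<Sum>q\<in>ks g. if (l, q) = (lk f, lk g) then cf f l * cf g q else 0)"
    unfolding lookup_mult_keys
  proof (intro sum.cong refl)
    fix l q assume l: "l \<in> ks f" and q: "q \<in> ks g"
    have "l = lk f \<and> q = lk g" if "lk f + lk g = l + q"
    proof -
      have e: "kap (lk f) + kap (lk g) = kap l + kap q" using that by (metis kap_add)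
      have le1: "kap l \<le> kap (lk f)" and le2: "kap q \<le> kap (lk g)" using lk_prop(2)[OF assms(1) l] lk_prop(2)[OF assms(2) q] by auto
      have "kap l = kap (lk f)"
      proof (rule ccontr)
        assume "kap l \<noteq> kap (lk f)"
        then have "kap l < kap (lk f)" using le1 by simp
        then have "kap l + kap q < kap (lk f) + kap (lk g)" using le2 by (rule add_less_le_mono)
        then show False using e by simp
      qed
      then have "kap q = kap (lk g)" using e by simp
      then show ?thesis using \<open>kap l = kap (lk f)\<close> kap_inj by blast
    qed
    then show "(if lk f + lk g = l + q then cf f l * cf g q else 0) =
          (if (l, q) = (lk f, lk g) then cf f l * cf g q else 0)" by auto
  qed
  also have "\<dots> = (\<Sum>l\<in>ks f. if l = lk f then cf f (lk f) * cf g (lk g) else 0)"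
  proof (intro sum.cong refl)
    fix l show "(\<Sum>q\<in>ks g. if (l, q) = (lk f, lk g) then cf f l * cf g q else 0) = (if l = lk f then cf f (lk f) * cf g (lk g) else 0)"
      using lk_prop(1)[OF assms(2)] by (cases "l = lk f") simp_all
  qed
  also have "\<dots> = cf f (lk f) * cf g (lk g)"
    using lk_prop(1)[OF assms(1)] by simp
  finally show ?thesis .
qed

lemma keys_mult_bound:
  assumes "f \<noteq> 0" "g \<noteq> 0" "k \<in> ks (f * g)"
  shows "kap k \<le> kap (lk f) + kap (lk g)"
proof -
  obtain a b where "k = a + b" "a \<in> ks f" "b \<in> ks g" using keys_mult assms(3) by blast
  then show ?thesis using lk_prop(2)[OF assms(1)] lk_prop(2)[OF assms(2)] by (simp add: kap_add add_mono)
qed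

lemma lk_mult:
  fixes f g :: "'k::idom P3"
  assumes "f \<noteq> 0" "g \<noteq> 0"
  shows "f * g \<noteq> 0" "lk (f * g) = lk f + lk g"
proof -
  have c: "cf (f * g) (lk f + lk g) \<noteq> 0"
    using lead_mult[OF assms] lk_prop(1)[OF assms(1)] lk_prop(1)[OF assms(2)] by (simp add: in_keys_iff)
  then show fg: "f * g \<noteq> 0" by auto
  have "lk f + lk g \<in> ks (f * g)" using c by (simp add: in_keys_iff)
  then have "kap (lk f + lk g) \<le> kap (lk (f * g))" using lk_prop(2)[OF fg] by blast
  moreover have "kap (lk (f * g)) \<le> kap (lk f + lk g)"
    using keys_mult_bound[OF assms lk_prop(1)[OF fg]] by (simp add: kap_add)
  ultimately show "lk (f * g) = lk f + lk g" by (intro kap_inj) simp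
qed

lemma lk_power:
  fixes f :: "'k::idom P3"
  assumes "f \<noteq> 0"
  shows "f ^ n \<noteq> 0 \<and> lk (f ^ n) = (n * fst (lk f), n * fst (snd (lk f)), n * snd (snd (lk f)))"
proof (induction n)
  case 0
  have "lk (1::'k P3) = 0"
    using lk_prop(1)[of "1::'k P3"] by simp
  then show ?case by (simp add: zero_triple)
next
  case (Suc n)
  then show ?case using lk_mult[OF assms, of "f^n"] by (cases "lk f") simp
qed


definition lin :: "'k::comm_ring_1 \<Rightarrow> 'k \<Rightarrow> 'k \<Rightarrow> 'k P3" where
  "lin a b c = sg (1,0,0) a + sg (0,1,0) b + sg (0,0,1) c"

lemma X_lin: "X1 = lin 1 0 0" "X2 = lin 0 1 0" "X3 = lin 0 0 1"
  by (simp_all add: lin_def X1_def X2_def X3_def)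

lemma hom1_lin:
  assumes "homogeneous 1 (f::'k::comm_ring_1 P3)"
  shows "f = lin (cf f (1,0,0)) (cf f (0,1,0)) (cf f (0,0,1))"
proof (rule P3_eqI)
  fix a b c
  show "cf f (a,b,c) = cf (lin (cf f (1,0,0)) (cf f (0,1,0)) (cf f (0,0,1))) (a,b,c)"
  proof (cases "(a,b,c) \<in> ks f")
    case True
    then have "a + b + c = 1" using assms unfolding homogeneous_def by fastforce
    then have "(a,b,c) = (1,0,0) \<or> (a,b,c) = (0,1,0) \<or> (a,b,c) = (0,0,1)" by auto
    then show ?thesis by (auto simp: lin_def lookup_add lookup_single)
  next
    case False
    then show ?thesis by (auto simp: lin_def lookup_add lookup_single when_def in_keys_iff)
  qed
qed

lemma pd_lin:
  "pd1 (lin a b c :: 'k::comm_ring_1 P3) = sg (0,0,0) a"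
  "pd2 (lin a b c :: 'k::comm_ring_1 P3) = sg (0,0,0) b"
  "pd3 (lin a b c :: 'k::comm_ring_1 P3) = sg (0,0,0) c"
  by (simp_all add: lin_def pd1_add pd2_add pd3_add pd1_single pd2_single pd3_single)

lemma numeral_P3: "(numeral n :: 'k::comm_ring_1 P3) = sg (0,0,0) (numeral n)"
  by (simp add: zero_triple[symmetric])

lemma pb_lin:
  "pb (lin a1 a2 a3) (lin b1 b2 b3 :: 'k::comm_ring_1 P3) =
     sg (1,1,0) (2*(a2*b3 - a3*b2)) + sg (2,0,0) (a3*b1 - a1*b3)"
  unfolding pb_alt pd_lin X1_def X2_def numeral_P3 power2_eq_square
  by (simp add: mult_single single_diff[symmetric] single_add[symmetric] algebra_simps numeral_2_eq_2)

lemma lin_mult_lookup: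
  "cf (lin a1 a2 a3 * lin b1 b2 b3 :: 'k::comm_ring_1 P3) (2,0,0) = a1*b1"
  "cf (lin a1 a2 a3 * lin b1 b2 b3 :: 'k::comm_ring_1 P3) (0,2,0) = a2*b2"
  "cf (lin a1 a2 a3 * lin b1 b2 b3 :: 'k::comm_ring_1 P3) (0,0,2) = a3*b3"
  "cf (lin a1 a2 a3 * lin b1 b2 b3 :: 'k::comm_ring_1 P3) (1,1,0) = a1*b2 + a2*b1"
  "cf (lin a1 a2 a3 * lin b1 b2 b3 :: 'k::comm_ring_1 P3) (1,0,1) = a1*b3 + a3*b1"
  "cf (lin a1 a2 a3 * lin b1 b2 b3 :: 'k::comm_ring_1 P3) (0,1,1) = a2*b3 + a3*b2"
  by (simp_all add: lin_def ring_distribs mult_single lookup_add lookup_single)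


lemma alg_hom_zero: "is_alg_hom \<phi> \<Longrightarrow> \<phi> 0 = 0"
  unfolding is_alg_hom_def by (metis add_0 add_left_imp_eq add_0_right)

lemma homog_X: "homogeneous 1 (X1::'k::comm_ring_1 P3)" "homogeneous 1 (X2::'k::comm_ring_1 P3)"
   "homogeneous 1 (X3::'k::comm_ring_1 P3)"
  by (simp_all add: homogeneous_def X1_def X2_def X3_def)

lemma single_nz: "v \<noteq> 0 \<Longrightarrow> sg k v \<noteq> 0"
  by (metis lookup_single_eq lookup_zero)

lemma X_ne: "(X1::'k::comm_ring_1 P3) \<noteq> 0" "(X2::'k::comm_ring_1 P3) \<noteq> 0" "(X3::'k::comm_ring_1 P3) \<noteq> 0"
  by (simp_all add: X1_def X2_def X3_def single_nz)

lemma pb_XX: "pb X3 X1 = (X1 * X1 :: 'k::comm_ring_1 P3)" "pb X2 X3 = (X1 * X2 + X1 * X2 :: 'k::comm_ring_1 P3)"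
  unfolding X_lin pb_lin by (simp_all add: lin_def mult_single numeral_2_eq_2 single_add[symmetric])

lemma paut_struct:
  fixes \<phi> :: "'k::field_char_0 P3 \<Rightarrow> 'k P3"
  assumes "\<phi> \<in> PAut_gr"
  obtains l u a b where "l \<noteq> 0" "u \<noteq> 0" "\<phi> X1 = lin l 0 0" "\<phi> X2 = lin 0 u 0" "\<phi> X3 = lin a b l"
proof -
  have bij: "bij \<phi>" and hom: "is_alg_hom \<phi>" and hg: "\<And>d f. homogeneous d f \<Longrightarrow> homogeneous d (\<phi> f)"
    and pbp: "\<And>f g. \<phi> (pb f g) = pb (\<phi> f) (\<phi> g)"
    using assms unfolding PAut_gr_def by auto
  have z: "\<phi> 0 = 0" using hom by (rule alg_hom_zero)
  have add: "\<And>f g. \<phi> (f + g) = \<phi> f + \<phi> g" and mul: "\<And>f g. \<phi> (f * g) = \<phi> f * \<phi> g"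
    using hom unfolding is_alg_hom_def by auto
  have inj: "inj \<phi>" using bij bij_is_inj by auto
  have nz: "\<phi> X1 \<noteq> 0" "\<phi> X2 \<noteq> 0" using inj z X_ne by (metis injD)+
  define a1 a2 a3 where "a1 = cf (\<phi> X1) (1,0,0)" "a2 = cf (\<phi> X1) (0,1,0)" "a3 = cf (\<phi> X1) (0,0,1)"
  define b1 b2 b3 where "b1 = cf (\<phi> X2) (1,0,0)" "b2 = cf (\<phi> X2) (0,1,0)" "b3 = cf (\<phi> X2) (0,0,1)"
  define c1 c2 c3 where "c1 = cf (\<phi> X3) (1,0,0)" "c2 = cf (\<phi> X3) (0,1,0)" "c3 = cf (\<phi> X3) (0,0,1)"
  have A: "\<phi> X1 = lin a1 a2 a3" unfolding a1_a2_a3_def by (rule hom1_lin, rule hg, rule homog_X)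
  have B: "\<phi> X2 = lin b1 b2 b3" unfolding b1_b2_b3_def by (rule hom1_lin, rule hg, rule homog_X)
  have C: "\<phi> X3 = lin c1 c2 c3" unfolding c1_c2_c3_def by (rule hom1_lin, rule hg, rule homog_X)
  have E1: "pb (lin c1 c2 c3) (lin a1 a2 a3) = lin a1 a2 a3 * lin a1 a2 a3"
    using pbp[of X3 X1] pb_XX(1) mul A C by metis
  have E2: "pb (lin b1 b2 b3) (lin c1 c2 c3) = lin a1 a2 a3 * lin b1 b2 b3 + lin a1 a2 a3 * lin b1 b2 b3"
    using pbp[of X2 X3] pb_XX(2) mul add A B C by metis
  have "cf (pb (lin c1 c2 c3) (lin a1 a2 a3)) (0,0,2) = cf (lin a1 a2 a3 * lin a1 a2 a3) (0,0,2)" using E1 by simp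
  then have "a3 = 0" unfolding pb_lin lin_mult_lookup by (simp add: lookup_add lookup_single)
  have "cf (pb (lin c1 c2 c3) (lin a1 a2 a3)) (0,2,0) = cf (lin a1 a2 a3 * lin a1 a2 a3) (0,2,0)" using E1 by simp
  then have "a2 = 0" unfolding pb_lin lin_mult_lookup by (simp add: lookup_add lookup_single)
  have "a1 \<noteq> 0" using nz(1) A \<open>a2 = 0\<close> \<open>a3 = 0\<close> by (auto simp: lin_def)
  have "cf (pb (lin c1 c2 c3) (lin a1 a2 a3)) (2,0,0) = cf (lin a1 a2 a3 * lin a1 a2 a3) (2,0,0)" using E1 by simp
  then have "c3 * a1 = a1 * a1" unfolding pb_lin lin_mult_lookup using \<open>a3 = 0\<close> by (simp add: lookup_add lookup_single)
  then have "c3 = a1" using \<open>a1 \<noteq> 0\<close> by simp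
  have "cf (pb (lin b1 b2 b3) (lin c1 c2 c3)) (1,0,1) = cf (lin a1 a2 a3 * lin b1 b2 b3 + lin a1 a2 a3 * lin b1 b2 b3) (1,0,1)" using E2 by simp
  then have "b3 = 0" unfolding pb_lin lookup_add lin_mult_lookup using \<open>a3 = 0\<close> \<open>a1 \<noteq> 0\<close> by (simp add: lookup_single)
  have "cf (pb (lin b1 b2 b3) (lin c1 c2 c3)) (2,0,0) = cf (lin a1 a2 a3 * lin b1 b2 b3 + lin a1 a2 a3 * lin b1 b2 b3) (2,0,0)" using E2 by simp
  then have "- (b1 * a1) = 2 * (a1 * b1)" unfolding pb_lin lookup_add lin_mult_lookup using \<open>b3 = 0\<close> \<open>c3 = a1\<close> by (simp add: lookup_single)
  then have "3 * (a1 * b1) = 0" by (simp add: algebra_simps)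
  then have "b1 = 0" using \<open>a1 \<noteq> 0\<close> by simp
  have "b2 \<noteq> 0" using nz(2) B \<open>b1 = 0\<close> \<open>b3 = 0\<close> by (auto simp: lin_def)
  show ?thesis
    apply (rule that[of a1 b2 c1 c2])
    using \<open>a1 \<noteq> 0\<close> \<open>b2 \<noteq> 0\<close> A B C \<open>a2 = 0\<close> \<open>a3 = 0\<close> \<open>b1 = 0\<close> \<open>b3 = 0\<close> \<open>c3 = a1\<close> by auto
qed


lemma refl_struct:
  fixes \<phi> :: "'k::field_char_0 P3 \<Rightarrow> 'k P3"
  assumes "poisson_reflection \<phi>"
  shows "\<phi> X1 = X1" "\<exists>u. u \<noteq> 0 \<and> u \<noteq> 1 \<and> \<phi> X2 = lin 0 u 0"
proof -
  have P: "\<phi> \<in> PAut_gr" using assms unfolding poisson_reflection_def by auto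
  obtain \<xi> where xi: "\<xi> \<noteq> 1" "char_poly (lin_part \<phi>) = [:-1, 1:] ^ 2 * [:-\<xi>, 1:]"
    using assms unfolding poisson_reflection_def by auto
  obtain l u a b where lu: "l \<noteq> 0" "u \<noteq> 0" "\<phi> X1 = lin l 0 0" "\<phi> X2 = lin 0 u 0" "\<phi> X3 = lin a b l"
    using paut_struct[OF P] by blast
  have sv: "\<phi> (sg (Suc 0,0,0) 1) = lin l 0 0" "\<phi> (sg (0,Suc 0,0) 1) = lin 0 u 0" "\<phi> (sg (0,0,Suc 0) 1) = lin a b l"
    using lu by (simp_all add: X1_def X2_def X3_def)
  define M where "M = lin_part \<phi>"
  have Mc: "M \<in> carrier_mat 3 3" unfolding M_def lin_part_def by simp
  have ent: "M $$ (i,j) = cf (\<phi> (sg (var j) 1)) (var i)" if "i < 3" "j < 3" for i j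
    using that unfolding M_def lin_part_def by simp
  have three: "i < 3 \<longleftrightarrow> i = 0 \<or> i = 1 \<or> i = (2::nat)" for i by auto
  have ut: "upper_triangular M"
    unfolding upper_triangular_def
  proof (intro allI impI)
    fix i j assume "i < dim_row M" "j < i"
    then have "i < 3" "j < 3" using Mc by auto
    then show "M $$ (i,j) = 0" using \<open>j < i\<close>
      unfolding ent[OF \<open>i < 3\<close> \<open>j < 3\<close>] three
      by (auto simp: sv lu lin_def lookup_add lookup_single var_def)
  qed
  have dg: "diag_mat M = [l, u, l]"
    unfolding diag_mat_def using Mc
    by (simp add: upt_rec ent sv lu lin_def lookup_add lookup_single var_def)
  have cp: "[:-l, 1:] * ([:-u, 1:] * [:-l, 1:]) = [:-1, 1:] ^ 2 * [:-\<xi>, 1:]"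
    using xi(2) char_poly_upper_triangular[OF Mc ut] dg unfolding M_def by simp
  have ev: "(x - l) * ((x - u) * (x - l)) = (x - 1)^2 * (x - \<xi>)" for x
    using arg_cong[OF cp, of "\<lambda>p. poly p x"] by (simp add: algebra_simps)
  have e1: "(l - 1)^2 * (l - \<xi>) = 0" using ev[of l] by simp
  have e2: "(1 - l) * ((1 - u) * (1 - l)) = 0" using ev[of 1] by simp
  have e3: "l * (u * l) = \<xi>" using ev[of 0] by simp
  have "l = 1"
  proof (rule ccontr)
    assume "l \<noteq> 1"
    then have "l = \<xi>" using e1 by simp
    moreover have "u = 1" using e2 \<open>l \<noteq> 1\<close> by simp
    ultimately have "l * l = l" using e3 by simp
    then show False using \<open>l \<noteq> 1\<close> \<open>l \<noteq> 0\<close> by simp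
  qed
  then have "u = \<xi>" using e3 by simp
  show "\<phi> X1 = X1" using lu \<open>l = 1\<close> by (simp add: X_lin)
  show "\<exists>u. u \<noteq> 0 \<and> u \<noteq> 1 \<and> \<phi> X2 = lin 0 u 0" using lu \<open>u = \<xi>\<close> xi by auto
qed


lemma lookup_mult_single: "cf (g * sg m v) (k + m) = cf g k * (v::'k::comm_ring_1)"
proof (cases "v = 0")
  case False
  have "cf (g * sg m v) (k + m) = (\<Sum>l\<in>ks g. \<Sum>q\<in>ks (sg m v). if k + m = l + q then cf g l * cf (sg m v) q else 0)"
    by (rule lookup_mult_keys)
  also have "\<dots> = (\<Sum>l\<in>ks g. if k + m = l + m then cf g l * v else 0)"
    using False apply (simp only: keys_single if_not_P[OF False])
    apply simp
    done
  also have "\<dots> = (\<Sum>l\<in>ks g. if l = k then cf g k * v else 0)"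
    by (intro sum.cong refl) auto
  also have "\<dots> = cf g k * v" by (simp add: in_keys_iff)
  finally show ?thesis .
qed simp

lemma lookup_mult_single0: "(\<And>k'. k \<noteq> k' + m) \<Longrightarrow> cf (g * sg m v) k = (0::'k::comm_ring_1)"
  unfolding lookup_mult_keys by (auto intro!: sum.neutral)

lemma single_pow: "(sg (a,b,c) v :: 'k::comm_ring_1 P3) ^ n = sg (n*a, n*b, n*c) (v ^ n)"
  by (induction n) (simp_all add: mult_single zero_triple[symmetric])

lemma pb_X1: "pb f X1 = pd3 f * X1^2"
  by (simp add: pb_alt)

lemma pb_pd3_zero: "pd3 f = 0 \<Longrightarrow> pb f h = pd3 h * (pd2 f * (2 * X1 * X2) - pd1 f * X1^2)"
  by (simp add: pb_alt algebra_simps)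

lemma coeff_E: "cf (pd2 f * (2 * X1 * X2) - pd1 f * X1^2 :: 'k::comm_ring_1 P3) (Suc a, b, c)
   = (2 * of_nat b - of_nat a) * cf f (a,b,c)"
proof -
  have e1: "2 * X1 * X2 = (sg (1,1,0) 2 :: 'k P3)" by (simp add: X1_def X2_def numeral_P3 mult_single)
  have e2: "X1^2 = (sg (2,0,0) 1 :: 'k P3)" by (simp add: X1_def single_pow)
  have t1: "cf (pd2 f * sg (1,1,0) 2) (Suc a, b, c) = 2 * of_nat b * cf f (a,b,c)"
  proof (cases b)
    case 0
    have "cf (pd2 f * sg (1,1,0) 2) (Suc a, b, c) = 0"
      by (rule lookup_mult_single0) (use 0 in auto)
    then show ?thesis using 0 by simp
  next
    case (Suc b')
    have "cf (pd2 f * sg (1,1,0) 2) ((a, b', c) + (1,1,0)) = cf (pd2 f) (a,b',c) * 2"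
      by (rule lookup_mult_single)
    then show ?thesis using Suc by (simp add: lookup_pd2 algebra_simps)
  qed
  have t2: "cf (pd1 f * sg (2,0,0) 1) (Suc a, b, c) = of_nat a * cf f (a,b,c)"
  proof (cases a)
    case 0
    have "cf (pd1 f * sg (2,0,0) 1) (Suc a, b, c) = 0"
      by (rule lookup_mult_single0) (use 0 in auto)
    then show ?thesis using 0 by simp
  next
    case (Suc a')
    have "cf (pd1 f * sg (2,0,0) 1) ((a', b, c) + (2,0,0)) = cf (pd1 f) (a',b,c) * 1"
      by (rule lookup_mult_single)
    then show ?thesis using Suc by (simp add: lookup_pd1 numeral_2_eq_2)
  qed
  show ?thesis unfolding e1 e2 lookup_minus t1 t2 by (simp add: algebra_simps)
qed

definition Zs :: "'k::zero P3 set" where "Zs = {f. \<forall>k\<in>ks f. \<exists>j. k = (2*j, j, 0)}"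

lemma center_Zs:
  fixes f h :: "'k::field_char_0 P3"
  assumes "pb f X1 = 0" "pb f h = 0" "pd3 h \<noteq> 0"
  shows "f \<in> Zs"
proof -
  have X1sq: "X1^2 \<noteq> (0::'k P3)" using lk_mult(1)[OF X_ne(1) X_ne(1)] by (simp add: power2_eq_square)
  have "pd3 f * X1^2 = 0" using assms(1) pb_X1 by metis
  then have p3: "pd3 f = 0" using X1sq lk_mult(1) by blast
  have "pd3 h * (pd2 f * (2 * X1 * X2) - pd1 f * X1^2) = 0" using assms(2) pb_pd3_zero[OF p3] by metis
  then have Q: "pd2 f * (2 * X1 * X2) - pd1 f * X1^2 = 0" using assms(3) lk_mult(1) by blast
  show ?thesis unfolding Zs_def
  proof (intro CollectI ballI)
    fix k assume k: "k \<in> ks f"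
    obtain a b c where kk: "k = (a,b,c)" by (cases k)
    have nz: "cf f (a,b,c) \<noteq> 0" using k kk by (simp add: in_keys_iff)
    have "c = 0"
    proof (cases c)
      case (Suc c')
      have "cf (pd3 f) (a,b,c') = 0" using p3 by simp
      then have "cf f (a,b,c) = 0" using Suc by (simp add: lookup_pd3 del: of_nat_Suc)
      then show ?thesis using nz by simp
    qed
    have "(2 * of_nat b - of_nat a) * cf f (a,b,c) = 0" using Q coeff_E[of f a b c] by simp
    then have "(of_nat (2*b) :: 'k) = of_nat a" using nz by simp
    then have "a = 2 * b" by (simp only: of_nat_eq_iff)
    then show "\<exists>j. k = (2*j, j, 0)" using kk \<open>c = 0\<close> by auto
  qed
qed

definition zmon :: "nat \<Rightarrow> 'k::comm_ring_1 P3" where "zmon j = sg (2*j, j, 0) 1"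

lemma zmon_central: "pb (zmon j) h = (0::'k::comm_ring_1 P3)"
proof (cases j)
  case 0
  then show ?thesis by (simp add: zmon_def pb_alt pd1_single pd2_single pd3_single)
next
  case (Suc j')
  have p3: "pd3 (zmon j :: 'k P3) = 0" by (simp add: zmon_def pd3_single)
  show ?thesis unfolding pb_pd3_zero[OF p3]
    by (simp add: Suc zmon_def pd1_single pd2_single X1_def X2_def numeral_P3 mult_single single_pow
       algebra_simps numeral_2_eq_2)
qed

lemma P3_sum_single: "f = (\<Sum>k\<in>ks f. sg k (cf f k))"
  by (rule poly_mapping_eqI) (simp add: lookup_sum lookup_single when_def in_keys_iff)


lemma const_add: "const (a + b) = const a + (const b :: 'k::comm_ring_1 P3)"
  by (simp add: const_def single_add)
lemma const_mult: "const (a * b) = const a * (const b :: 'k::comm_ring_1 P3)"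
  by (simp add: const_def mult_single)
lemma const_one: "const 1 = (1 :: 'k::comm_ring_1 P3)"
  by (simp add: const_def zero_triple[symmetric])
lemma const_zero: "const 0 = (0 :: 'k::comm_ring_1 P3)"
  by (simp add: const_def)

interpretation const_hom: comm_ring_hom "const :: 'k::comm_ring_1 \<Rightarrow> 'k P3"
  by unfold_locales (simp_all add: const_add const_mult const_one const_zero)

interpretation const_mp: map_poly_comm_ring_hom "const :: 'k::comm_ring_1 \<Rightarrow> 'k P3" ..

definition emb :: "'k::comm_ring_1 poly \<Rightarrow> 'k P3" where
  "emb p = poly (map_poly const p) (zmon 1)"

lemma emb_mult: "emb (p * q) = emb p * emb q"
  by (simp add: emb_def const_mp.hom_mult)
lemma emb_add: "emb (p + q) = emb p + emb q"
  by (simp add: emb_def const_mp.hom_add)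
lemma emb_sum: "emb (sum f I) = (\<Sum>i\<in>I. emb (f i))"
  by (induction I rule: infinite_finite_induct) (simp_all add: emb_add emb_def[of 0])
lemma emb_monom: "emb (monom c n) = sg (2*n, n, 0) c"
  by (simp add: emb_def poly_monom zmon_def single_pow const_def mult_single mult.commute)
lemma emb_pcompose: "emb (pcompose p q) = poly (map_poly const p) (emb q)"
  by (simp add: emb_def const_hom.map_poly_pcompose poly_pcompose)
lemma emb_x: "emb [:0, 1:] = zmon 1"
  by (simp add: emb_def const_zero const_one)

lemma lookup_emb: "cf (emb p) (2*j, j, 0) = coeff p j"
proof -
  have "emb p = (\<Sum>i\<le>degree p. sg (2*i, i, 0) (coeff p i))"
    by (subst poly_as_sum_of_monoms[symmetric]) (simp add: emb_sum emb_monom)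
  then have "cf (emb p) (2*j, j, 0) = (\<Sum>i\<le>degree p. if i = j then coeff p i else 0)"
    by (auto simp: lookup_sum lookup_single when_def intro!: sum.cong)
  also have "\<dots> = coeff p j" by (auto simp: coeff_eq_0)
  finally show ?thesis .
qed

lemma emb_inj: "emb p = emb q \<Longrightarrow> p = q"
  by (rule poly_eqI) (metis lookup_emb)

lemma emb_Zs: assumes "f \<in> Zs" shows "f = emb (\<Sum>k\<in>ks f. monom (cf f k) (fst (snd k)))"
proof -
  have "emb (\<Sum>k\<in>ks f. monom (cf f k) (fst (snd k))) = (\<Sum>k\<in>ks f. sg k (cf f k))"
    unfolding emb_sum emb_monom
  proof (intro sum.cong refl)
    fix k assume "k \<in> ks f"
    then obtain j where "k = (2*j, j, 0)" using assms unfolding Zs_def by auto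
    then show "sg (2 * fst (snd k), fst (snd k), 0) (cf f k) = sg k (cf f k)" by simp
  qed
  then show ?thesis using P3_sum_single[of f] by simp
qed


lemma alg_hom_pow: "is_alg_hom \<phi> \<Longrightarrow> \<phi> (f ^ n) = \<phi> f ^ n"
  by (induction n) (auto simp: is_alg_hom_def)

lemma alg_hom_sum: "is_alg_hom \<phi> \<Longrightarrow> \<phi> (sum f I) = (\<Sum>i\<in>I. \<phi> (f i))"
  by (induction I rule: infinite_finite_induct) (auto simp: alg_hom_zero, simp add: is_alg_hom_def)

lemma alg_hom_const: "is_alg_hom \<phi> \<Longrightarrow> \<phi> (const c) = const c"
  unfolding is_alg_hom_def by (metis mult.right_neutral)

lemma single_as_prod: "sg (a,b,0) v = const v * (X1 ^ a * X2 ^ b :: 'k::comm_ring_1 P3)"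
  by (simp add: const_def X1_def X2_def single_pow mult_single)

lemma act_mono:
  fixes g :: "'k::comm_ring_1 P3 \<Rightarrow> 'k P3"
  assumes "is_alg_hom g" "g X1 = X1" "g X2 = lin 0 u 0"
  shows "g (sg (a,b,0) v) = sg (a,b,0) (v * u^b)"
proof -
  have "g (sg (a,b,0) v) = const v * (X1 ^ a * lin 0 u 0 ^ b)"
    unfolding single_as_prod using assms alg_hom_pow[OF assms(1)] alg_hom_const[OF assms(1)]
    by (simp add: is_alg_hom_def)
  also have "\<dots> = sg (a,b,0) (v * u^b)"
    by (simp add: lin_def const_def X1_def single_pow mult_single)
  finally show ?thesis .
qed

lemma act_lookup:
  fixes g :: "'k::comm_ring_1 P3 \<Rightarrow> 'k P3"
  assumes "is_alg_hom g" "g X1 = X1" "g X2 = lin 0 u 0" "\<forall>k\<in>ks f. snd (snd k) = 0"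
  shows "cf (g f) (a,b,0) = cf f (a,b,0) * u^b"
proof -
  have "g f = (\<Sum>k\<in>ks f. g (sg k (cf f k)))"
    by (subst P3_sum_single) (rule alg_hom_sum[OF assms(1)])
  also have "\<dots> = (\<Sum>k\<in>ks f. sg k (cf f k * u ^ fst (snd k)))"
  proof (intro sum.cong refl)
    fix k assume "k \<in> ks f"
    then obtain x y where k: "k = (x,y,0)" using assms(4) by (cases k) auto
    show "g (sg k (cf f k)) = sg k (cf f k * u ^ fst (snd k))"
      unfolding k by (simp add: act_mono[OF assms(1-3)])
  qed
  finally have "cf (g f) (a,b,0) = (\<Sum>k\<in>ks f. if k = (a,b,0) then cf f (a,b,0) * u^b else 0)"
    by (auto simp: lookup_sum lookup_single when_def intro!: sum.cong)
  also have "\<dots> = cf f (a,b,0) * u^b" by (auto simp: in_keys_iff)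
  finally show ?thesis .
qed


lemma final_contra:
  fixes F p q :: "'k::field_char_0 P3"
  assumes F: "F = p ^ n * q" and n: "n \<ge> 4" and kF: "ks F \<subseteq> {(0,0,0), (2,1,0)}" "(2,1,0) \<in> ks F"
    and nc: "\<forall>c. p \<noteq> const c"
  shows False
proof -
  have F0: "F \<noteq> 0" using kF(2) by auto
  have p0: "p \<noteq> 0" using nc const_zero by metis
  have q0: "q \<noteq> 0" using F F0 by auto
  have "lk F \<in> ks F" using lk_prop(1)[OF F0] .
  have "lk F = (2,1,0)"
  proof (rule ccontr)
    assume "lk F \<noteq> (2,1,0)"
    then have "lk F = 0" using \<open>lk F \<in> ks F\<close> kF(1) zero_triple by auto
    then have "kap (2,1,0) \<le> 0" using lk_prop(2)[OF F0 kF(2)] kap_zero by simp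
    moreover have "0 < kap ((2,1,0)::nat\<times>nat\<times>nat)" by (rule kap_pos) (simp add: zero_triple)
    ultimately show False by simp
  qed
  obtain a b c where lp: "lk p = (a,b,c)" by (cases "lk p")
  obtain a' b' c' where lq: "lk q = (a',b',c')" by (cases "lk q")
  have pn: "p ^ n \<noteq> 0" "lk (p ^ n) = (n*a, n*b, n*c)" using lk_power[OF p0, of n] lp by auto
  have "lk F = lk (p^n) + lk q" using F lk_mult(2)[OF pn(1) q0] by simp
  then have "(2,1,0) = (n*a + a', n*b + b', n*c + c')" using \<open>lk F = (2,1,0)\<close> pn lq by simp
  then have e: "2 = n*a + a'" "1 = n*b + b'" "0 = n*c + c'" by auto
  have "a = 0" proof (rule ccontr) assume "a \<noteq> 0" then have "n * a \<ge> n * 1" by (intro mult_le_mono2) simp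
    then show False using e n by linarith qed
  have "b = 0" proof (rule ccontr) assume "b \<noteq> 0" then have "n * b \<ge> n * 1" by (intro mult_le_mono2) simp
    then show False using e n by linarith qed
  have "c = 0" using e n by simp
  then have lk0: "lk p = 0" using lp \<open>a = 0\<close> \<open>b = 0\<close> by (simp add: zero_triple)
  have "\<forall>k\<in>ks p. k = 0"
  proof
    fix k assume "k \<in> ks p"
    then have "kap k \<le> 0" using lk_prop(2)[OF p0] lk0 kap_zero by metis
    then show "k = 0" using kap_pos[of k] by (cases "k = 0") auto
  qed
  then have "p = const (cf p 0)"
    unfolding const_def zero_triple[symmetric]
    by (intro poly_mapping_eqI) (auto simp: lookup_single when_def in_keys_iff)
  then show False using nc by blast
qed



lemma gen_group_empty: "g \<in> gen_group {} \<Longrightarrow> g = id"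
  by (induction rule: gen_group.induct) (auto simp: inv_id)

theorem lemma3p2p2:
  fixes G :: "('k::field_char_0 P3 \<Rightarrow> 'k P3) set"
  assumes "alg_closed_type TYPE('k)"
    and "finite_subgroup_PAut G"
    and "G \<noteq> {id}"
    and "G = gen_group {g \<in> G. poisson_reflection g}"
  shows "\<not> poisson_iso_to_P (invariants G)"
proof
  assume iso: "poisson_iso_to_P (invariants G)"
  define S where "S = {g \<in> G. poisson_reflection g}"
  define A where "A = invariants G"
  have gen: "G = gen_group S" using assms(4) S_def by simp
  have finG: "finite G" and GP: "G \<subseteq> PAut_gr" and idG: "id \<in> G"
    and compG: "\<And>a b. a \<in> G \<Longrightarrow> b \<in> G \<Longrightarrow> a \<circ> b \<in> G"
    using assms(2) unfolding finite_subgroup_PAut_def by auto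
  have homG: "is_alg_hom g" if "g \<in> G" for g using GP that unfolding PAut_gr_def by auto
  have bijG: "bij g" if "g \<in> G" for g using GP that unfolding PAut_gr_def by auto
  have pbG: "g (pb f h) = pb (g f) (g h)" if "g \<in> G" for g f h using GP that unfolding PAut_gr_def by auto
  have G1: "g X1 = X1" if "g \<in> G" for g
  proof -
    have "g \<in> gen_group S \<Longrightarrow> g X1 = X1"
    proof (induction rule: gen_group.induct)
      case (gen_base s) then show ?case using refl_struct(1) S_def by auto
    next
      case (gen_inv a)
      have "inj a" using bijG[of a] gen_inv(1) gen bij_is_inj by auto
      then show ?case using gen_inv(2) by (intro inv_into_f_eq) auto
    next
      case gen_id then show ?case by simp
    next
      case (gen_comp a b) then show ?case by simp
    qed
    then show ?thesis using that gen by blast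
  qed
  obtain r where rG: "r \<in> G" and rr: "poisson_reflection r"
  proof -
    have "S \<noteq> {}"
    proof
      assume "S = {}"
      then have "G \<subseteq> {id}" using gen gen_group_empty by blast
      then show False using idG assms(3) by auto
    qed
    then show ?thesis using that S_def by blast
  qed
  define mu where "mu g = cf (g X2) (0,1,0)" for g :: "'k P3 \<Rightarrow> 'k P3"
  have G2: "g X2 = lin 0 (mu g) 0 \<and> mu g \<noteq> 0" if "g \<in> G" for g
  proof -
    have "g \<in> PAut_gr" using GP that by blast
    then obtain l u a b where "u \<noteq> 0" "g X2 = lin 0 u 0" by (rule paut_struct)
    then show ?thesis unfolding mu_def by (simp add: lin_def lookup_add)
  qed
  have mur: "mu r \<noteq> 1"
  proof -
    obtain u where "u \<noteq> 1" "r X2 = lin 0 u 0" using refl_struct(2)[OF rr] by blast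
    then show ?thesis unfolding mu_def by (simp add: lin_def lookup_add)
  qed

  have A_iff: "f \<in> A \<longleftrightarrow> (\<forall>g\<in>G. g f = f)" for f unfolding A_def invariants_def by simp
  have A_add: "f + h \<in> A" if "f \<in> A" "h \<in> A" for f h
    unfolding A_iff
  proof
    fix g assume g: "g \<in> G"
    have "g f = f" "g h = h" using that g unfolding A_iff by auto
    then show "g (f + h) = f + h" using homG[OF g] unfolding is_alg_hom_def by simp
  qed
  have A_mult: "f * h \<in> A" if "f \<in> A" "h \<in> A" for f h
    unfolding A_iff
  proof
    fix g assume g: "g \<in> G"
    have "g f = f" "g h = h" using that g unfolding A_iff by auto
    then show "g (f * h) = f * h" using homG[OF g] unfolding is_alg_hom_def by simp
  qed
  have A_pb: "pb f h \<in> A" if "f \<in> A" "h \<in> A" for f h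
    unfolding A_iff
  proof
    fix g assume g: "g \<in> G"
    have "g f = f" "g h = h" using that g unfolding A_iff by auto
    then show "g (pb f h) = pb f h" using pbG[OF g] by simp
  qed
  have A_const: "const c \<in> A" for c using homG alg_hom_const unfolding A_iff by blast
  have A_zero: "0 \<in> A" using A_const[of 0] const_zero by simp
  have A_one: "1 \<in> A" using A_const[of 1] const_one by simp
  have A_pow: "f ^ n \<in> A" if "f \<in> A" for f n
    by (induction n) (simp_all add: A_one A_mult that)
  have A_X1: "X1 \<in> A" using G1 unfolding A_iff by blast
  obtain \<psi> where bij\<psi>: "bij_betw \<psi> A UNIV"
    and hA: "\<forall>f\<in>A. \<forall>g\<in>A. \<psi> (f + g) = \<psi> f + \<psi> g \<and> \<psi> (f * g) = \<psi> f * \<psi> g \<and> \<psi> (pb f g) = pb (\<psi> f) (\<psi> g)"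
    and cA: "\<forall>c. \<forall>f\<in>A. \<psi> (const c * f) = const c * \<psi> f" and \<psi>1: "\<psi> 1 = 1"
    using iso unfolding poisson_iso_to_P_def A_def by blast
  have \<psi>add: "\<psi> (f + h) = \<psi> f + \<psi> h" if "f \<in> A" "h \<in> A" for f h using hA that by blast
  have \<psi>mult: "\<psi> (f * h) = \<psi> f * \<psi> h" if "f \<in> A" "h \<in> A" for f h using hA that by blast
  have \<psi>pb: "\<psi> (pb f h) = pb (\<psi> f) (\<psi> h)" if "f \<in> A" "h \<in> A" for f h using hA that by blast
  have \<psi>0: "\<psi> 0 = 0" using \<psi>add[OF A_zero A_zero] by simp
  have \<psi>const: "\<psi> (const c) = const c" for c using cA A_one \<psi>1 by (metis mult.right_neutral)
  have \<psi>pow: "\<psi> (f ^ n) = \<psi> f ^ n" if "f \<in> A" for f n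
    by (induction n) (simp_all add: \<psi>1 \<psi>mult A_pow that)
  have \<psi>sum: "\<psi> (sum f I) = (\<Sum>i\<in>I. \<psi> (f i)) \<and> sum f I \<in> A" if "finite I" "\<And>i. i \<in> I \<Longrightarrow> f i \<in> A" for f I
    using that by (induction I rule: finite_induct) (simp_all add: \<psi>0 A_zero \<psi>add A_add)
  have inj\<psi>: "inj_on \<psi> A" using bij\<psi> bij_betw_imp_inj_on by blast
  define \<psi>' where "\<psi>' = inv_into A \<psi>"
  have \<psi>'A: "\<psi>' y \<in> A" for y unfolding \<psi>'_def using bij\<psi>
    by (metis UNIV_I bij_betw_imp_surj_on inv_into_into)
  have \<psi>\<psi>': "\<psi> (\<psi>' y) = y" for y unfolding \<psi>'_def using bij\<psi>
    by (metis UNIV_I bij_betw_imp_surj_on f_inv_into_f)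
  obtain h0 where h0A: "h0 \<in> A" and h0: "pd3 h0 \<noteq> 0"
  proof -
    have "\<exists>h\<in>A. pd3 h \<noteq> 0"
    proof (rule ccontr)
      assume "\<not> (\<exists>h\<in>A. pd3 h \<noteq> 0)"
      then have all: "\<forall>h\<in>A. pd3 h = 0" by blast
      have "pb (\<psi>' X2) (\<psi>' X3) = 0" using all \<psi>'A by (simp add: pb_alt)
      then have "\<psi> (pb (\<psi>' X2) (\<psi>' X3)) = 0" using \<psi>0 by simp
      moreover have "\<psi> (pb (\<psi>' X2) (\<psi>' X3)) = pb X2 X3" using \<psi>pb \<psi>'A \<psi>\<psi>' by simp
      moreover have "cf (pb X2 X3 :: 'k P3) (1,1,0) = 2"
        unfolding pb_XX(2) by (simp add: X1_def X2_def mult_single lookup_add numeral_P3)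
      ultimately show False by simp
    qed
    then show ?thesis using that by blast
  qed
  have cenA: "f \<in> Zs" if "f \<in> A" "\<forall>h\<in>A. pb f h = 0" for f
    using center_Zs[of f h0] that A_X1 h0A h0 by blast
  \<comment> \<open>preimage of the Casimir x1^2 x2\<close>
  define e where "e = \<psi>' (zmon 1)"
  have eA: "e \<in> A" and \<psi>e: "\<psi> e = zmon 1" unfolding e_def using \<psi>'A \<psi>\<psi>' by auto
  have eZ: "e \<in> Zs"
  proof (rule cenA[OF eA], intro ballI)
    fix h assume h: "h \<in> A"
    have "\<psi> (pb e h) = pb (zmon 1) (\<psi> h)" using \<psi>pb[OF eA h] \<psi>e by simp
    also have "\<dots> = \<psi> 0" by (simp add: zmon_central \<psi>0)
    finally show "pb e h = 0" using inj\<psi> A_pb[OF eA h] A_zero by (meson inj_onD)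
  qed

  have linX2: "lin 0 c 0 = const c * (X2 :: 'k P3)" for c
    by (simp add: lin_def const_def X2_def mult_single)
  have ord: "\<exists>n>0. mu g ^ n = 1" if g: "g \<in> G" for g
  proof -
    have fG: "(g ^^ i) \<in> G" for i
    proof (induction i)
      case 0 show ?case using idG by (simp add: id_def)
    next
      case (Suc i) show ?case using compG[OF g Suc.IH] by (simp only: funpow.simps(2))
    qed
    have fX2: "(g ^^ i) X2 = lin 0 (mu g ^ i) 0" for i
    proof (induction i)
      case 0 then show ?case by (simp add: X_lin)
    next
      case (Suc i)
      have "(g ^^ Suc i) X2 = g (const (mu g ^ i) * X2)" using Suc linX2 by simp
      also have "\<dots> = const (mu g ^ i) * g X2" using homG[OF g] unfolding is_alg_hom_def by blast
      also have "\<dots> = lin 0 (mu g ^ Suc i) 0" using G2[OF g] unfolding linX2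
        by (simp only: const_mult power_Suc) (simp add: ac_simps)
      finally show ?case .
    qed
    have "\<not> inj_on (\<lambda>i. g ^^ i) {..card G}"
    proof
      assume "inj_on (\<lambda>i. g ^^ i) {..card G}"
      then have "card {..card G} \<le> card G" using fG finG by (intro card_inj_on_le) auto
      then show False by simp
    qed
    then obtain i j where ij: "i \<noteq> j" "g ^^ i = g ^^ j" unfolding inj_on_def by blast
    obtain i' j' where ij': "i' < j'" "g ^^ i' = g ^^ j'"
      using ij by (cases "i < j") (auto intro: that[of i j] that[of j i] simp: linorder_neq_iff)
    have "cf ((g ^^ i') X2) (0,1,0) = cf ((g ^^ j') X2) (0,1,0)" using ij' by simp
    then have e: "mu g ^ i' = mu g ^ j'" unfolding fX2 by (simp add: lin_def lookup_add)
    have "mu g ^ j' = mu g ^ i' * mu g ^ (j' - i')" using ij' by (simp add: power_add[symmetric])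
    then have "mu g ^ (j' - i') = 1" using e G2[OF g] by simp
    then show ?thesis using ij' by (intro exI[of _ "j' - i'"]) simp
  qed
  obtain ordf where ordf: "\<And>g. g \<in> G \<Longrightarrow> ordf g > 0 \<and> mu g ^ ordf g = 1"
    using ord by metis
  define N where "N = prod ordf G"
  have N0: "N > 0" unfolding N_def using ordf by (intro prod_pos) auto
  have muN: "mu g ^ N = 1" if "g \<in> G" for g
  proof -
    have "ordf g dvd N" unfolding N_def using that finG by (intro dvd_prodI)
    then obtain k where "N = ordf g * k" by blast
    then show ?thesis using ordf[OF that] by (simp add: power_mult)
  qed
  define P where "P = (\<lambda>n. 0 < n \<and> (\<forall>g\<in>G. mu g ^ n = (1::'k)))"
  define m where "m = (LEAST n. P n)"
  have Pm: "P m" unfolding m_def by (rule LeastI[of P N]) (simp add: P_def N0 muN)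
  have m0: "0 < m" and mum: "\<And>g. g \<in> G \<Longrightarrow> mu g ^ m = 1" using Pm unfolding P_def by auto
  have m2: "m \<ge> 2"
  proof (rule ccontr)
    assume "\<not> m \<ge> 2" then have "m = 1" using m0 by simp
    then show False using mum[OF rG] mur by simp
  qed
  have mdvd: "m dvd j" if "\<And>g. g \<in> G \<Longrightarrow> mu g ^ j = 1" for j
  proof (rule ccontr)
    assume nd: "\<not> m dvd j"
    have "mu g ^ (j mod m) = 1" if g: "g \<in> G" for g
    proof -
      have "mu g ^ j = (mu g ^ m) ^ (j div m) * mu g ^ (j mod m)"
        by (simp add: power_mult[symmetric] power_add[symmetric])
      then show ?thesis using mum[OF g] \<open>\<And>g. g \<in> G \<Longrightarrow> mu g ^ j = 1\<close>[OF g] by simp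
    qed
    then have "P (j mod m)" unfolding P_def using nd by (auto simp: dvd_eq_mod_eq_0)
    then have "m \<le> j mod m" unfolding m_def by (rule Least_le)
    then show False using m0 by (meson mod_less_divisor not_le)
  qed

  have act: "g (sg (a,b,0) v) = sg (a,b,0) (v * mu g ^ b)" if g: "g \<in> G" for g a b v
    using act_mono[OF homG[OF g] G1[OF g]] G2[OF g] by blast
  have zmA: "zmon (m * t) \<in> A" for t
    unfolding A_iff zmon_def
  proof
    fix g assume g: "g \<in> G"
    show "g (sg (2 * (m * t), m * t, 0) 1) = sg (2 * (m * t), m * t, 0) 1"
      using act[OF g, of "2*(m*t)" "m*t" 1] mum[OF g] by (simp add: power_mult)
  qed
  have X2m: "X2 ^ m = (sg (0,m,0) 1 :: 'k P3)" by (simp add: X2_def single_pow)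
  have X2mA: "X2 ^ m \<in> A"
    unfolding A_iff X2m
  proof
    fix g assume g: "g \<in> G"
    show "g (sg (0, m, 0) 1) = sg (0, m, 0) 1"
      using act[OF g, of 0 m 1] mum[OF g] by simp
  qed
  have zm_prod: "zmon m = X1 ^ (2*m) * X2 ^ m"
    by (simp add: zmon_def X1_def X2_def single_pow mult_single)
  define F where "F = \<psi> (zmon m)"
  have FZ: "F \<in> Zs"
  proof (rule center_Zs[of F X3])
    have "pb F y = 0" for y
    proof -
      have "pb F y = pb (\<psi> (zmon m)) (\<psi> (\<psi>' y))" unfolding F_def \<psi>\<psi>' ..
      also have "\<dots> = \<psi> (pb (zmon m) (\<psi>' y))" using \<psi>pb[OF zmA[of 1] \<psi>'A] by simp
      also have "\<dots> = 0" by (simp add: zmon_central \<psi>0)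
      finally show ?thesis .
    qed
    then show "pb F X1 = 0" "pb F X3 = 0" by auto
    show "pd3 (X3::'k P3) \<noteq> 0" by simp
  qed
  have ekeys: "\<exists>t. k = (2*(m*t), m*t, 0)" if k: "k \<in> ks e" for k
  proof -
    obtain j where kj: "k = (2*j, j, 0)" using eZ k unfolding Zs_def by auto
    have "mu g ^ j = 1" if g: "g \<in> G" for g
    proof -
      have "cf (g e) (2*j, j, 0) = cf e (2*j, j, 0) * mu g ^ j"
        using eZ unfolding Zs_def
        by (intro act_lookup[OF homG[OF g] G1[OF g]] conjunct1[OF G2[OF g]]) auto
      moreover have "g e = e" using eA g unfolding A_iff by auto
      moreover have "cf e (2*j, j, 0) \<noteq> 0" using k kj by (simp add: in_keys_iff)
      ultimately show ?thesis by simp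
    qed
    then have "m dvd j" by (rule mdvd)
    then show ?thesis using kj by auto
  qed
  define Fp where "Fp = (\<Sum>k\<in>ks F. monom (cf F k) (fst (snd k)))"
  have FFp: "F = emb Fp" unfolding Fp_def by (rule emb_Zs[OF FZ])
  define Hp where "Hp = (\<Sum>k\<in>ks e. monom (cf e k) (fst (snd k) div m))"
  have termA: "sg k (cf e k) = const (cf e k) * zmon m ^ (fst (snd k) div m)" if kk: "k \<in> ks e" for k
  proof -
    obtain t where kt: "k = (2*(m*t), m*t, 0)" using ekeys[OF kk] by blast
    show ?thesis unfolding kt using m0
      by (simp add: zmon_def single_pow const_def mult_single ac_simps)
  qed
  have "zmon 1 = \<psi> e" using \<psi>e by simp
  also have "\<dots> = \<psi> (\<Sum>k\<in>ks e. const (cf e k) * zmon m ^ (fst (snd k) div m))"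
    by (subst P3_sum_single[of e]) (simp add: termA cong: sum.cong)
  also have "\<dots> = (\<Sum>k\<in>ks e. \<psi> (const (cf e k) * zmon m ^ (fst (snd k) div m)))"
    using \<psi>sum[of "ks e" "\<lambda>k. const (cf e k) * zmon m ^ (fst (snd k) div m)"] A_mult A_const A_pow zmA[of 1]
    by simp
  also have "\<dots> = (\<Sum>k\<in>ks e. const (cf e k) * F ^ (fst (snd k) div m))"
    unfolding F_def using cA A_pow zmA[of 1] \<psi>pow by simp
  also have "\<dots> = poly (map_poly const Hp) F"
    unfolding Hp_def const_mp.hom_sum poly_hom.hom_sum by (simp add: poly_monom)
  also have "\<dots> = emb (pcompose Hp Fp)" unfolding FFp emb_pcompose ..
  finally have zz: "zmon 1 = emb (pcompose Hp Fp)" .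
  have "emb [:0, 1:] = emb (pcompose Hp Fp)" using emb_x zz by metis
  then have "pcompose Hp Fp = [:0, 1:]" using emb_inj by metis
  then have "degree Hp * degree Fp = 1" using degree_pcompose[of Hp Fp] by simp
  then have dF: "degree Fp = 1" by simp
  have kF: "ks F \<subseteq> {(0,0,0), (2,1,0)}"
  proof
    fix k assume k: "k \<in> ks F"
    obtain j where kj: "k = (2*j, j, 0)" using FZ k unfolding Zs_def by auto
    have "coeff Fp j \<noteq> 0" using k kj FFp lookup_emb[of Fp j] by (simp add: in_keys_iff)
    then have "j \<le> 1" using dF le_degree by fastforce
    then show "k \<in> {(0,0,0), (2,1,0)}" using kj by (cases j) auto
  qed
  have kF2: "(2,1,0) \<in> ks F"
  proof -
    have "coeff Fp 1 \<noteq> 0" using dF by (metis leading_coeff_0_iff zero_neq_one degree_0)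
    then show ?thesis using FFp lookup_emb[of Fp 1] by (simp add: in_keys_iff)
  qed
  have Fprod: "F = \<psi> X1 ^ (2*m) * \<psi> (X2 ^ m)"
    unfolding F_def zm_prod using \<psi>mult[OF A_pow[OF A_X1] X2mA] \<psi>pow[OF A_X1] by simp
  have nc: "\<forall>c. \<psi> X1 \<noteq> const c"
  proof
    fix c show "\<psi> X1 \<noteq> const c"
    proof
      assume "\<psi> X1 = const c"
      then have "\<psi> X1 = \<psi> (const c)" using \<psi>const by simp
      then have "X1 = const c" using inj\<psi> A_X1 A_const by (meson inj_onD)
      then have "cf X1 (1,0,0) = cf (const c) (1,0,0)" by simp
      then show False by (simp add: X1_def const_def lookup_single)
    qed
  qed
  show False using final_contra[OF Fprod _ kF kF2 nc] m2 by simp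
qed

end
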